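(* Let $r\in(0,1/36)$, $p\in(0,r)$, $h=8/15$, $a=3/15$, let $m,n\in\mathbb N$ and $D_{mn}(p,r)=\left(\frac{a\,r^{n+1}}{p^m},\,r\right)$. For $q\in D_{mn}(p,r)$ let $K_{pqr}$ be the attractor of $\mathcal S_{pqr}=\{S_1,\dots,S_6\}$ with $S_1(x)=px$, $S_2(x)=a+rx$, $S_3(x)=h-qx$, $S_4(x)=h-r+rx$, $S_5(x)=1-a-rx$, $S_6(x)=1-r+rx$. Let $\Delta_{mn}(p,r)$ be the set of $q\in D_{mn}(p,r)$ for which there exist $i\in\{2,\dots,6\}$ and $j\in\{1,\dots,5\}$ with $S_3S_1^mS_i(K_{pqr})\cap S_4S_6^nS_j(K_{pqr})\neq\emptyset$. Then $\Delta_{mn}(p,r)$ is a closed subset of $D_{mn}(p,r)$ and $\dim_H\Delta_{mn}(p,r)\le-\frac{2\log 6}{\log r}$.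
   Context: $S_1^m$ denotes $m$-fold composition; $\dim_H$ is Hausdorff dimension. *)

theory Defs
  imports "HOL-Analysis.Analysis"
begin

definition ifs_attractor :: "'i set \<Rightarrow> ('i \<Rightarrow> real \<Rightarrow> real) \<Rightarrow> real set" where
  "ifs_attractor I S = (THE K. compact K \<and> K \<noteq> {} \<and> K = (\<Union>i\<in>I. S i ` K))"

definition hcst :: real where "hcst = 8/15"
definition acst :: real where "acst = 3/15"

definition Spqr :: "real \<Rightarrow> real \<Rightarrow> real \<Rightarrow> nat \<Rightarrow> real \<Rightarrow> real" where
  "Spqr p q r i x =
     (if i = 1 then p * x
      else if i = 2 then acst + r * x
      else if i = 3 then hcst - q * x
      else if i = 4 then hcst - r + r * x
      else if i = 5 then 1 - acst - r * x
      else 1 - r + r * x)"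

definition Kpqr :: "real \<Rightarrow> real \<Rightarrow> real \<Rightarrow> real set" where
  "Kpqr p q r = ifs_attractor {1..6} (Spqr p q r)"

definition Dmn :: "nat \<Rightarrow> nat \<Rightarrow> real \<Rightarrow> real \<Rightarrow> real set" where
  "Dmn m n p r = {acst * r ^ (n + 1) / p ^ m <..< r}"

definition Deltamn :: "nat \<Rightarrow> nat \<Rightarrow> real \<Rightarrow> real \<Rightarrow> real set" where
  "Deltamn m n p r = {q \<in> Dmn m n p r. \<exists>i\<in>{2..6}. \<exists>j\<in>{1..5}.
      (Spqr p q r 3 \<circ> (Spqr p q r 1 ^^ m) \<circ> Spqr p q r i) ` Kpqr p q r \<inter>
      (Spqr p q r 4 \<circ> (Spqr p q r 6 ^^ n) \<circ> Spqr p q r j) ` Kpqr p q r \<noteq> {}}"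

definition hausdorff_pre :: "real \<Rightarrow> real \<Rightarrow> real set \<Rightarrow> ennreal" where
  "hausdorff_pre s \<delta> A =
     (INF C \<in> {C :: nat \<Rightarrow> real set. A \<subseteq> (\<Union>i. C i) \<and> (\<forall>i. bounded (C i) \<and> diameter (C i) \<le> \<delta>)}.
        (\<Sum>i. ennreal (diameter (C i) powr s)))"

definition hausdorff_measure :: "real \<Rightarrow> real set \<Rightarrow> ennreal" where
  "hausdorff_measure s A = (SUP \<delta>\<in>{0<..}. hausdorff_pre s \<delta> A)"

definition hausdorff_dim :: "real set \<Rightarrow> real" where
  "hausdorff_dim A = Inf {s. 0 \<le> s \<and> hausdorff_measure s A = 0}"

end

theory Submission
  imports Defs
begin


lemma range_aux: fixes v a b c r :: real and i :: nat
  assumes "(i = 1 \<and> v = a) \<or> (i \<noteq> 1 \<and> (v = acst + b \<or> v = hcst - c \<or> v = hcst - r + b \<or> v = 1 - acst - b \<or> v = 1 - r + b))"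
   "0 \<le> a" "a \<le> 1" "0 \<le> b" "b \<le> r" "0 \<le> c" "c \<le> r" "0<r" "r < 1/36"
  shows "0 \<le> v \<and> v \<le> 1 \<and> (i \<noteq> 1 \<longrightarrow> acst \<le> v)"
  using assms unfolding acst_def hcst_def by auto

definition coefS :: "real \<Rightarrow> real \<Rightarrow> real \<Rightarrow> nat \<Rightarrow> real" where
  "coefS p q r i = (if i=1 then p else if i=2 then r else if i=3 then -q else if i=4 then r else if i=5 then -r else r)"

locale pr =
  fixes p r :: real
  assumes p0: "0 \<le> p" and pr: "p \<le> r" and r0: "0 < r" and r36: "r < 1/36"
begin

lemma S_range:
  assumes "0 \<le> q" "q \<le> r" "x \<in> {0..1}"
  shows "Spqr p q r i x \<in> {0..1}"
proof -
  have x: "0 \<le> x" "x \<le> 1" using assms by auto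
  have f1: "p * x \<le> 1" "0 \<le> p * x" using x p0 pr r36 by (auto intro: mult_le_one)
  have f2: "r * x \<le> r" "0 \<le> r * x" using x r0 by (auto simp: mult_left_le)
  have f3: "q * x \<le> q" "0 \<le> q*x" using x assms by (auto simp: mult_left_le)
  have disj: "(i = 1 \<and> Spqr p q r i x = p*x) \<or> (i \<noteq> 1 \<and> (Spqr p q r i x = acst + r*x \<or> Spqr p q r i x = hcst - q*x \<or>
    Spqr p q r i x = hcst - r + r*x \<or> Spqr p q r i x = 1 - acst - r*x \<or> Spqr p q r i x = 1 - r + r*x))"
    by (simp add: Spqr_def)
  have "0 \<le> Spqr p q r i x \<and> Spqr p q r i x \<le> 1 \<and> (i \<noteq> 1 \<longrightarrow> acst \<le> Spqr p q r i x)"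
    using range_aux[OF disj f1(2) f1(1) f2(2) f2(1) f3(2) order_trans[OF f3(1) assms(2)] r0 r36] .
  thus ?thesis using assms by auto
qed

lemma S_diff: "Spqr p q r i x - Spqr p q r i y = coefS p q r i * (x - y)"
  unfolding Spqr_def coefS_def by (simp add: algebra_simps)

lemma S_lip:
  assumes "0 \<le> q" "q \<le> r"
  shows "\<bar>Spqr p q r i x - Spqr p q r i y\<bar> \<le> r * \<bar>x - y\<bar>"
proof -
  have "\<bar>coefS p q r i\<bar> \<le> r" unfolding coefS_def using assms p0 pr r0 by auto
  thus ?thesis unfolding S_diff abs_mult by (simp add: mult_right_mono)
qed

lemma S_pert:
  assumes "0 \<le> q" "q \<le> r" "0 \<le> q'" "q' \<le> r" "x \<in> {0..1}"
  shows "\<bar>Spqr p q' r i x - Spqr p q r i y\<bar> \<le> \<bar>q' - q\<bar> + r * \<bar>x - y\<bar>"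
proof -
  have "\<bar>q' * x - q * y\<bar> \<le> \<bar>q' - q\<bar> + r * \<bar>x - y\<bar>"
  proof -
    have "q' * x - q * y = (q' - q) * x + q * (x - y)" by (simp add: algebra_simps)
    hence "\<bar>q' * x - q * y\<bar> \<le> \<bar>q' - q\<bar> * \<bar>x\<bar> + q * \<bar>x - y\<bar>"
      using assms by (simp add: abs_mult abs_triangle_ineq[THEN order_trans])
    also have "\<dots> \<le> \<bar>q' - q\<bar> + r * \<bar>x - y\<bar>"
      using assms by (intro add_mono mult_right_mono) (auto intro: mult_left_le)
    finally show ?thesis .
  qed
  moreover have "\<bar>Spqr p q' r i x - Spqr p q r i y\<bar> \<le> r * \<bar>x - y\<bar>" if "i \<noteq> 3"
  proof -
    have "Spqr p q' r i x = Spqr p q r i x" using that by (simp add: Spqr_def)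
    thus ?thesis using S_lip[OF assms(1,2), of i x y] by simp
  qed
  moreover have "\<bar>q' - q\<bar> + r * \<bar>x - y\<bar> \<ge> r * \<bar>x - y\<bar>" by simp
  moreover have "i = 3 \<Longrightarrow> Spqr p q' r i x - Spqr p q r i y = - (q' * x - q * y)"
    by (simp add: Spqr_def)
  ultimately show ?thesis by (cases "i = 3") (simp only: abs_minus_cancel, linarith)+
qed

lemma S_lower:
  assumes "0 \<le> q" "q \<le> r" "x \<in> {0..1}" "i \<noteq> 1"
  shows "acst \<le> Spqr p q r i x"
proof -
  have x: "0 \<le> x" "x \<le> 1" using assms by auto
  have f1: "p * x \<le> 1" "0 \<le> p * x" using x p0 pr r36 by (auto intro: mult_le_one)
  have f2: "r * x \<le> r" "0 \<le> r * x" using x r0 by (auto simp: mult_left_le)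
  have f3: "q * x \<le> q" "0 \<le> q*x" using x assms by (auto simp: mult_left_le)
  have disj: "(i = 1 \<and> Spqr p q r i x = p*x) \<or> (i \<noteq> 1 \<and> (Spqr p q r i x = acst + r*x \<or> Spqr p q r i x = hcst - q*x \<or>
    Spqr p q r i x = hcst - r + r*x \<or> Spqr p q r i x = 1 - acst - r*x \<or> Spqr p q r i x = 1 - r + r*x))"
    by (simp add: Spqr_def)
  have "0 \<le> Spqr p q r i x \<and> Spqr p q r i x \<le> 1 \<and> (i \<noteq> 1 \<longrightarrow> acst \<le> Spqr p q r i x)"
    using range_aux[OF disj f1(2) f1(1) f2(2) f2(1) f3(2) order_trans[OF f3(1) assms(2)] r0 r36] .
  thus ?thesis using assms by auto
qed


lemma S_affine: "\<exists>A B. \<forall>x. Spqr p q r i x = A + B * x"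
proof -
  have "Spqr p q r i x = Spqr p q r i 0 + coefS p q r i * x" for x
  proof -
    have "Spqr p q r i x - Spqr p q r i 0 = coefS p q r i * x" using S_diff[of q i x 0] by simp
    thus ?thesis by linarith
  qed
  thus ?thesis by blast
qed

lemma S_cont: "continuous_on X (Spqr p q r i)"
proof -
  obtain A B where "\<forall>x. Spqr p q r i x = A + B * x" using S_affine by blast
  hence "Spqr p q r i = (\<lambda>x. A + B * x)" by auto
  thus ?thesis by (simp add: continuous_intros)
qed

end

lemma attr_close:
  fixes K K' :: "real set" and T T' :: "nat \<Rightarrow> real \<Rightarrow> real"
  assumes K: "compact K" "K \<noteq> {}" and K': "bounded K'"
    and cov: "\<forall>x\<in>K'. \<exists>i\<in>I. \<exists>x0\<in>K'. x = T' i x0"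
    and inv: "\<forall>i\<in>I. \<forall>y\<in>K. T i y \<in> K"
    and est: "\<forall>i\<in>I. \<forall>x\<in>K'. \<forall>y\<in>K. dist (T' i x) (T i y) \<le> e + c * dist x y"
    and c: "0 \<le> c" "c < 1"
    and x: "x \<in> K'"
  shows "infdist x K \<le> e / (1 - c)"
proof -
  define d where "d = Sup ((\<lambda>x. infdist x K) ` K')"
  obtain a where a: "a \<in> K" using K by auto
  obtain B where B: "\<forall>x\<in>K'. dist a x \<le> B" using K' bounded_any_center by blast
  have bdd: "bdd_above ((\<lambda>x. infdist x K) ` K')"
  proof (rule bdd_aboveI2)
    fix x assume "x \<in> K'"
    hence "infdist x K \<le> dist x a" using infdist_le[OF a] by blast
    thus "infdist x K \<le> B" using B \<open>x \<in> K'\<close> by (auto simp: dist_commute)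
  qed
  have key: "infdist z K \<le> e + c * d" if z: "z \<in> K'" for z
  proof -
    obtain i x0 where i: "i \<in> I" "x0 \<in> K'" "z = T' i x0" using cov z by blast
    obtain y0 where y0: "y0 \<in> K" "infdist x0 K = dist x0 y0"
      using infdist_attains_inf[OF compact_imp_closed[OF K(1)] K(2)] by blast
    have "infdist z K \<le> dist z (T i y0)" using inv i y0 infdist_le by blast
    also have "\<dots> \<le> e + c * dist x0 y0" using est i y0 by blast
    also have "\<dots> \<le> e + c * d"
    proof -
      have "infdist x0 K \<le> d" unfolding d_def using bdd i(2) by (intro cSup_upper) auto
      thus ?thesis using y0 c by (simp add: mult_left_mono)
    qed
    finally show ?thesis .
  qed
  have "d \<le> e + c * d" unfolding d_def using x key
    by (intro cSup_least) (auto simp: d_def)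
  hence "d * (1 - c) \<le> e" by (simp add: algebra_simps)
  hence "d \<le> e / (1 - c)" using c by (simp add: pos_le_divide_eq)
  moreover have "infdist x K \<le> d" unfolding d_def using bdd x by (intro cSup_upper) auto
  ultimately show ?thesis by simp
qed

inductive_set orb :: "real \<Rightarrow> real \<Rightarrow> real \<Rightarrow> real set" for p q r where
  orb0: "0 \<in> orb p q r"
| orbS: "x \<in> orb p q r \<Longrightarrow> i \<in> {1..6} \<Longrightarrow> Spqr p q r i x \<in> orb p q r"

context pr begin

lemma orb_sub:
  assumes "0 \<le> q" "q \<le> r"
  shows "orb p q r \<subseteq> {0..1}"
proof
  fix x assume "x \<in> orb p q r" thus "x \<in> {0..1}"
    by induction (use S_range[OF assms] in auto)
qed

lemma K0_props:
  assumes "0 \<le> q" "q \<le> r"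
  defines "K0 \<equiv> closure (orb p q r)"
  shows "compact K0" "K0 \<noteq> {}" "K0 = (\<Union>i\<in>{1..6}. Spqr p q r i ` K0)" "K0 \<subseteq> {0..1}"
proof -
  show sub: "K0 \<subseteq> {0..1}" unfolding K0_def using orb_sub[OF assms(1,2)]
    by (simp add: closure_minimal)
  show cK: "compact K0" unfolding K0_def compact_closure
    using orb_sub[OF assms(1,2)] bounded_subset[OF bounded_closed_interval] by blast
  show "K0 \<noteq> {}" unfolding K0_def using orb0 by (metis closure_eq_empty empty_iff)
  have "compact (Spqr p q r i ` K0)" for i
    by (intro compact_continuous_image S_cont cK)
  hence cU: "compact (\<Union>i\<in>{1..6}. Spqr p q r i ` K0)"
    by (intro compact_UN) auto
  have "orb p q r \<subseteq> (\<Union>i\<in>{1..6}. Spqr p q r i ` K0)"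
  proof
    fix x assume x: "x \<in> orb p q r"
    thus "x \<in> (\<Union>i\<in>{1..6}. Spqr p q r i ` K0)"
    proof cases
      case orb0
      have "Spqr p q r 1 0 = 0" by (simp add: Spqr_def)
      moreover have "(0::real) \<in> K0" unfolding K0_def by (meson closure_subset orb.orb0 subsetD)
      ultimately have "0 \<in> Spqr p q r 1 ` K0" by (metis image_eqI)
      moreover have "(1::nat) \<in> {1..6}" by simp
      ultimately show ?thesis using orb0 by blast
    next
      case (orbS y i)
      have "y \<in> K0" unfolding K0_def using orbS closure_subset by blast
      thus ?thesis using orbS by blast
    qed
  qed
  hence "K0 \<subseteq> (\<Union>i\<in>{1..6}. Spqr p q r i ` K0)"
    using closure_minimal[OF _ compact_imp_closed[OF cU]] by (simp add: K0_def)
  moreover have "Spqr p q r i ` K0 \<subseteq> K0" if "i \<in> {1..6}" for i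
    unfolding K0_def
  proof (rule image_closure_subset[OF S_cont closed_closure])
    show "Spqr p q r i ` orb p q r \<subseteq> closure (orb p q r)"
      using orbS[OF _ that] closure_subset by blast
  qed
  ultimately show "K0 = (\<Union>i\<in>{1..6}. Spqr p q r i ` K0)" by blast
qed

lemma K_unique:
  assumes q: "0 \<le> q" "q \<le> r"
    and K: "compact K" "K \<noteq> {}" "K = (\<Union>i\<in>{1..6}. Spqr p q r i ` K)"
    and L: "compact L" "L \<noteq> {}" "L = (\<Union>i\<in>{1..6}. Spqr p q r i ` L)"
  shows "L \<subseteq> K"
proof
  fix x assume x: "x \<in> L"
  have "infdist x K \<le> 0 / (1 - r)"
  proof (rule attr_close[OF K(1,2) compact_imp_bounded[OF L(1)], where I="{1..6}" and T="Spqr p q r" and T'="Spqr p q r"])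
    show "\<forall>x\<in>L. \<exists>i\<in>{1..6}. \<exists>x0\<in>L. x = Spqr p q r i x0" using L(3) by blast
    show "\<forall>i\<in>{1..6}. \<forall>y\<in>K. Spqr p q r i y \<in> K" using K(3) by blast
    show "\<forall>i\<in>{1..6}. \<forall>x\<in>L. \<forall>y\<in>K. dist (Spqr p q r i x) (Spqr p q r i y) \<le> 0 + r * dist x y"
      using S_lip[OF q] by (simp add: dist_real_def)
  qed (use x r0 r36 in auto)
  hence "infdist x K = 0" using infdist_nonneg[of x K] by simp
  thus "x \<in> K" using in_closure_iff_infdist_zero[OF K(2)] closure_closed[OF compact_imp_closed[OF K(1)]] by auto
qed

lemma K_props:
  assumes "0 \<le> q" "q \<le> r"
  shows "compact (Kpqr p q r)" "Kpqr p q r \<noteq> {}"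
    "Kpqr p q r = (\<Union>i\<in>{1..6}. Spqr p q r i ` Kpqr p q r)" "Kpqr p q r \<subseteq> {0..1}"
proof -
  have "Kpqr p q r = closure (orb p q r)"
    unfolding Kpqr_def ifs_attractor_def
  proof (rule the_equality)
    show "compact (closure (orb p q r)) \<and> closure (orb p q r) \<noteq> {} \<and>
      closure (orb p q r) = (\<Union>i\<in>{1..6}. Spqr p q r i ` closure (orb p q r))"
      using K0_props[OF assms] by blast
    fix K assume "compact K \<and> K \<noteq> {} \<and> K = (\<Union>i\<in>{1..6}. Spqr p q r i ` K)"
    thus "K = closure (orb p q r)"
      using K_unique[OF assms] K0_props[OF assms] by (metis subset_antisym)
  qed
  thus "compact (Kpqr p q r)" "Kpqr p q r \<noteq> {}"
    "Kpqr p q r = (\<Union>i\<in>{1..6}. Spqr p q r i ` Kpqr p q r)" "Kpqr p q r \<subseteq> {0..1}"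
    using K0_props[OF assms] by auto
qed

end


lemma img_int: "(f ` K \<inter> g ` K \<noteq> {}) \<longleftrightarrow> (\<exists>x\<in>K. \<exists>y\<in>K. f x = g y)"
  by blast

context pr begin

lemma S1_pow: "(Spqr p q r 1 ^^ m) x = p ^ m * x"
  by (induction m) (simp_all add: Spqr_def)

lemma S6_pow: "(Spqr p q r 6 ^^ n) x = 1 - r ^ n * (1 - x)"
proof (induction n)
  case (Suc n)
  have "(Spqr p q r 6 ^^ Suc n) x = Spqr p q r 6 ((Spqr p q r 6 ^^ n) x)" by simp
  also have "\<dots> = 1 - r + r * (1 - r ^ n * (1 - x))" by (simp add: Suc Spqr_def)
  also have "\<dots> = 1 - r ^ Suc n * (1 - x)" by (simp add: algebra_simps)
  finally show ?case .
qed simp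

lemma S3: "Spqr p q r 3 y = hcst - q * y" by (simp add: Spqr_def)
lemma S4: "Spqr p q r 4 y = hcst - r + r * y" by (simp add: Spqr_def)

lemma eq_iff: "(hcst - q * (p ^ m * a) = hcst - r + r * (1 - r ^ n * (1 - b))) \<longleftrightarrow>
   (q * p ^ m * a = r ^ (n + 1) * (1 - b))"
  by (auto simp: algebra_simps)

lemma Delta_iff:
  "q \<in> Deltamn m n p r \<longleftrightarrow> q \<in> Dmn m n p r \<and>
     (\<exists>i\<in>{2..6}. \<exists>j\<in>{1..5}. \<exists>x\<in>Kpqr p q r. \<exists>y\<in>Kpqr p q r.
        q * p ^ m * Spqr p q r i x = r ^ (n + 1) * (1 - Spqr p q r j y))"
proof -
  have *: "((Spqr p q r 3 \<circ> (Spqr p q r 1 ^^ m) \<circ> Spqr p q r i) ` K \<inter>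
      (Spqr p q r 4 \<circ> (Spqr p q r 6 ^^ n) \<circ> Spqr p q r j) ` K \<noteq> {}) \<longleftrightarrow>
      (\<exists>x\<in>K. \<exists>y\<in>K. q * p ^ m * Spqr p q r i x = r ^ (n + 1) * (1 - Spqr p q r j y))" for i j K
  proof -
    have "((Spqr p q r 3 \<circ> (Spqr p q r 1 ^^ m) \<circ> Spqr p q r i) ` K \<inter>
      (Spqr p q r 4 \<circ> (Spqr p q r 6 ^^ n) \<circ> Spqr p q r j) ` K \<noteq> {}) \<longleftrightarrow>
      (\<exists>x\<in>K. \<exists>y\<in>K. (Spqr p q r 3 \<circ> (Spqr p q r 1 ^^ m) \<circ> Spqr p q r i) x =
          (Spqr p q r 4 \<circ> (Spqr p q r 6 ^^ n) \<circ> Spqr p q r j) y)" by (rule img_int)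
    also have "\<dots> \<longleftrightarrow> (\<exists>x\<in>K. \<exists>y\<in>K. q * p ^ m * Spqr p q r i x = r ^ (n + 1) * (1 - Spqr p q r j y))"
      by (simp only: comp_apply S1_pow S6_pow S3 S4 eq_iff)
    finally show ?thesis .
  qed
  show ?thesis by (simp only: Deltamn_def mem_Collect_eq *)
qed

lemma D_sub: "q \<in> Dmn m n p r \<Longrightarrow> 0 \<le> q \<and> q \<le> r"
proof -
  assume q: "q \<in> Dmn m n p r"
  have "0 \<le> acst * r ^ (n + 1) / p ^ m" using p0 r0 by (simp add: acst_def)
  thus ?thesis using q unfolding Dmn_def by auto
qed

lemma near:
  assumes q: "0 \<le> q" "q \<le> r" and q': "0 \<le> q'" "q' \<le> r" and x': "x' \<in> Kpqr p q' r"
  shows "\<exists>x\<in>Kpqr p q r. \<bar>x' - x\<bar> \<le> 2 * \<bar>q' - q\<bar>"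
proof -
  note K = K_props[OF q] and K' = K_props[OF q']
  have "infdist x' (Kpqr p q r) \<le> \<bar>q' - q\<bar> / (1 - r)"
  proof (rule attr_close[OF K(1,2) compact_imp_bounded[OF K'(1)], where I="{1..6}" and T="Spqr p q r" and T'="Spqr p q' r"])
    show "\<forall>x\<in>Kpqr p q' r. \<exists>i\<in>{1..6}. \<exists>x0\<in>Kpqr p q' r. x = Spqr p q' r i x0"
      using K'(3) by blast
    show "\<forall>i\<in>{1..6}. \<forall>y\<in>Kpqr p q r. Spqr p q r i y \<in> Kpqr p q r" using K(3) by blast
    show "\<forall>i\<in>{1..6}. \<forall>x\<in>Kpqr p q' r. \<forall>y\<in>Kpqr p q r.
        dist (Spqr p q' r i x) (Spqr p q r i y) \<le> \<bar>q' - q\<bar> + r * dist x y"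
      using S_pert[OF q q'] K'(4) by (auto simp: dist_real_def)
  qed (use x' r0 r36 in auto)
  moreover obtain x where x: "x \<in> Kpqr p q r" "infdist x' (Kpqr p q r) = dist x' x"
    using infdist_attains_inf[OF compact_imp_closed[OF K(1)] K(2)] by blast
  moreover have "\<bar>q' - q\<bar> / (1 - r) \<le> 2 * \<bar>q' - q\<bar>"
  proof -
    have "1 / (1 - r) \<le> 2" using r0 r36 by (simp add: divide_le_eq)
    hence "\<bar>q' - q\<bar> * (1 / (1 - r)) \<le> \<bar>q' - q\<bar> * 2" by (intro mult_left_mono) auto
    thus ?thesis by simp
  qed
  ultimately have "dist x' x \<le> 2 * \<bar>q' - q\<bar>" by linarith
  thus ?thesis using x(1) by (auto simp: dist_real_def)
qed

lemma prod_diff: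
  fixes q q' a a' :: real
  assumes "0 \<le> a" "a \<le> 1" "0 \<le> q'" "q' \<le> 1"
  shows "\<bar>q * a - q' * a'\<bar> \<le> \<bar>q - q'\<bar> + \<bar>a - a'\<bar>"
proof -
  have "q * a - q' * a' = (q - q') * a + q' * (a - a')" by (simp add: algebra_simps)
  moreover have "\<bar>(q - q') * a\<bar> \<le> \<bar>q - q'\<bar>" using assms by (simp add: abs_mult mult_left_le)
  moreover have "\<bar>q' * (a - a')\<bar> \<le> \<bar>a - a'\<bar>" using assms by (simp add: abs_mult mult_left_le_one_le)
  ultimately show ?thesis by (metis abs_triangle_ineq add_mono order_trans)
qed

lemma scale_le: fixes c t :: real assumes "0 \<le> c" "c \<le> 1" shows "\<bar>c * t\<bar> \<le> \<bar>t\<bar>"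
  using assms by (simp add: abs_mult mult_left_le_one_le)

lemma Delta_closed: "closedin (top_of_set (Dmn m n p r)) (Deltamn m n p r)"
proof -
  let ?D = "Dmn m n p r" and ?\<Delta> = "Deltamn m n p r"
  have sub: "?\<Delta> \<subseteq> ?D" using Delta_iff by blast
  have pm: "0 \<le> p ^ m" "p ^ m \<le> 1" using p0 pr r36 by (auto intro: power_le_one)
  have rn: "0 \<le> r ^ (n+1)" "r ^ (n+1) \<le> 1" using r0 r36 power_le_one[of r "n+1"] by auto
  have "openin (top_of_set ?D) (?D - ?\<Delta>)"
    unfolding openin_euclidean_subtopology_iff
  proof (intro conjI ballI)
    fix q assume qD: "q \<in> ?D - ?\<Delta>"
    have q: "0 \<le> q" "q \<le> r" using D_sub qD by auto
    define K where "K = Kpqr p q r"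
    note K = K_props[OF q, folded K_def]
    define A where "A i = (\<lambda>x. q * p ^ m * Spqr p q r i x) ` K" for i
    define B where "B j = (\<lambda>y. r ^ (n + 1) * (1 - Spqr p q r j y)) ` K" for j
    define P where "P = {2..6::nat} \<times> {1..5::nat}"
    have finP: "finite P" "P \<noteq> {}" unfolding P_def by auto
    have pos: "setdist (A i) (B j) > 0" if "(i, j) \<in> P" for i j
    proof -
      have cA: "compact (A i)" unfolding A_def
        by (intro compact_continuous_image K(1) continuous_intros S_cont)
      have cB: "compact (B j)" unfolding B_def
        by (intro compact_continuous_image K(1) continuous_intros S_cont)
      have "A i \<inter> B j = {}"
      proof (rule ccontr)
        assume "A i \<inter> B j \<noteq> {}"
        then obtain x y where "x \<in> K" "y \<in> K" "q * p ^ m * Spqr p q r i x = r ^ (n + 1) * (1 - Spqr p q r j y)"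
          unfolding A_def B_def by auto
        hence "q \<in> ?\<Delta>" using Delta_iff[of q] qD that unfolding P_def K_def by blast
        thus False using qD by blast
      qed
      moreover have "A i \<noteq> {}" "B j \<noteq> {}" unfolding A_def B_def using K(2) by auto
      ultimately have "setdist (A i) (B j) \<noteq> 0"
        using setdist_eq_0_compact_closed[OF cA compact_imp_closed[OF cB]] by auto
      thus ?thesis using setdist_pos_le[of "A i" "B j"] by linarith
    qed
    define \<delta> where "\<delta> = Min ((\<lambda>(i, j). setdist (A i) (B j)) ` P)"
    have \<delta>pos: "\<delta> > 0" unfolding \<delta>_def using finP pos by (auto simp: Min_gr_iff)
    have \<delta>le: "\<delta> \<le> setdist (A i) (B j)" if "(i, j) \<in> P" for i j
      unfolding \<delta>_def using finP that by (intro Min_le) force+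
    show "\<exists>e>0. \<forall>q'\<in>?D. dist q' q < e \<longrightarrow> q' \<in> ?D - ?\<Delta>"
    proof (intro exI[of _ "\<delta> / 5"] conjI ballI impI)
      show "\<delta> / 5 > 0" using \<delta>pos by simp
      fix q' assume q'D: "q' \<in> ?D" and dq: "dist q' q < \<delta> / 5"
      have q': "0 \<le> q'" "q' \<le> r" using D_sub q'D by auto
      show "q' \<in> ?D - ?\<Delta>"
      proof
        show "q' \<in> ?D" by fact
        show "q' \<notin> ?\<Delta>"
        proof
          assume "q' \<in> ?\<Delta>"
          then obtain i j x' y' where ij: "i \<in> {2..6}" "j \<in> {1..5}" and xy': "x' \<in> Kpqr p q' r" "y' \<in> Kpqr p q' r"
            and eq: "q' * p ^ m * Spqr p q' r i x' = r ^ (n + 1) * (1 - Spqr p q' r j y')"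
            using Delta_iff by blast
          obtain x where x: "x \<in> K" "\<bar>x' - x\<bar> \<le> 2 * \<bar>q' - q\<bar>"
            using near[OF q q' xy'(1)] unfolding K_def by blast
          obtain y where y: "y \<in> K" "\<bar>y' - y\<bar> \<le> 2 * \<bar>q' - q\<bar>"
            using near[OF q q' xy'(2)] unfolding K_def by blast
          have x'01: "x' \<in> {0..1}" "y' \<in> {0..1}" using xy' K_props(4)[OF q'] by auto
          have r2: "r * (2 * \<bar>q' - q\<bar>) \<le> \<bar>q' - q\<bar>"
            using mult_left_le_one_le[of "\<bar>q' - q\<bar>" "2 * r"] r0 r36 by (simp add: algebra_simps)
          have da: "\<bar>Spqr p q' r i x' - Spqr p q r i x\<bar> \<le> 2 * \<bar>q' - q\<bar>"
          proof -
            have "\<bar>Spqr p q' r i x' - Spqr p q r i x\<bar> \<le> \<bar>q' - q\<bar> + r * \<bar>x' - x\<bar>"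
              using S_pert[OF q q' x'01(1)] .
            also have "\<dots> \<le> \<bar>q' - q\<bar> + r * (2 * \<bar>q' - q\<bar>)" using x r0 by (intro add_left_mono mult_left_mono) auto
            also have "\<dots> \<le> \<bar>q' - q\<bar> + \<bar>q' - q\<bar>" using r2 by (rule add_left_mono)
            finally show ?thesis by simp
          qed
          have db: "\<bar>Spqr p q' r j y' - Spqr p q r j y\<bar> \<le> 2 * \<bar>q' - q\<bar>"
          proof -
            have "\<bar>Spqr p q' r j y' - Spqr p q r j y\<bar> \<le> \<bar>q' - q\<bar> + r * \<bar>y' - y\<bar>"
              using S_pert[OF q q' x'01(2)] .
            also have "\<dots> \<le> \<bar>q' - q\<bar> + r * (2 * \<bar>q' - q\<bar>)" using y r0 by (intro add_left_mono mult_left_mono) auto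
            also have "\<dots> \<le> \<bar>q' - q\<bar> + \<bar>q' - q\<bar>" using r2 by (rule add_left_mono)
            finally show ?thesis by simp
          qed
          define a where "a = Spqr p q r i x"
          define a' where "a' = Spqr p q' r i x'"
          define b where "b = Spqr p q r j y"
          define b' where "b' = Spqr p q' r j y'"
          have a01: "a \<in> {0..1}" unfolding a_def using S_range[OF q] x K(4) by auto
          have "q' \<le> 1" using q' r36 by simp
          have u: "\<bar>q * p ^ m * a - q' * p ^ m * a'\<bar> \<le> 3 * \<bar>q' - q\<bar>"
          proof -
            have "\<bar>q * p ^ m * a - q' * p ^ m * a'\<bar> = \<bar>p ^ m * (q * a - q' * a')\<bar>"
              by (simp add: algebra_simps)
            also have "\<dots> \<le> \<bar>q * a - q' * a'\<bar>" using scale_le[OF pm] .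
            also have "\<dots> \<le> \<bar>q - q'\<bar> + \<bar>a - a'\<bar>" using prod_diff[of a q' q a'] a01 q' \<open>q' \<le> 1\<close> by auto
            finally show ?thesis using da unfolding a_def a'_def by (simp add: abs_minus_commute)
          qed
          have v: "\<bar>r ^ (n + 1) * (1 - b') - r ^ (n + 1) * (1 - b)\<bar> \<le> 2 * \<bar>q' - q\<bar>"
          proof -
            have "\<bar>r ^ (n + 1) * (1 - b') - r ^ (n + 1) * (1 - b)\<bar> = \<bar>r ^ (n + 1) * (b - b')\<bar>"
              by (simp add: algebra_simps)
            also have "\<dots> \<le> \<bar>b - b'\<bar>" using scale_le[OF rn] .
            finally show ?thesis using db unfolding b_def b'_def by (simp add: abs_minus_commute)
          qed
          have uA: "q * p ^ m * a \<in> A i" unfolding A_def a_def using x by auto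
          have vB: "r ^ (n + 1) * (1 - b) \<in> B j" unfolding B_def b_def using y by auto
          have "(i, j) \<in> P" unfolding P_def using ij by auto
          hence "\<delta> \<le> dist (q * p ^ m * a) (r ^ (n + 1) * (1 - b))"
            using \<delta>le setdist_le_dist[OF uA vB] by force
          also have "\<dots> \<le> 5 * \<bar>q' - q\<bar>"
            using u v eq unfolding dist_real_def a'_def b'_def by linarith
          also have "\<dots> < \<delta>" using dq by (simp add: dist_real_def)
          finally show False by simp
        qed
      qed
    qed
  qed (auto)
  thus ?thesis unfolding closedin_def using sub by simp
qed

end


fun Sw :: "real \<Rightarrow> real \<Rightarrow> real \<Rightarrow> nat list \<Rightarrow> real \<Rightarrow> real" where
  "Sw p q r [] x = x"
| "Sw p q r (i # w) x = Spqr p q r i (Sw p q r w x)"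

definition words :: "nat \<Rightarrow> nat list set" where
  "words k = {w. set w \<subseteq> {1..6} \<and> length w = k}"

definition Qset :: "nat \<Rightarrow> nat \<Rightarrow> real \<Rightarrow> real \<Rightarrow> nat \<Rightarrow> nat \<Rightarrow> nat list \<Rightarrow> nat list \<Rightarrow> real set" where
  "Qset m n p r i j w w' = {q \<in> Dmn m n p r. \<exists>z1\<in>Kpqr p q r. \<exists>z2\<in>Kpqr p q r.
      q * p ^ m * Spqr p q r i (Sw p q r w z1) = r ^ (n + 1) * (1 - Spqr p q r j (Sw p q r w' z2))}"

definition Fam :: "nat \<Rightarrow> ((nat \<times> nat) \<times> (nat list \<times> nat list)) set" where
  "Fam k = ({2..6} \<times> {1..5}) \<times> (words k \<times> words k)"

lemma card_Fam: "finite (Fam k) \<and> card (Fam k) = 25 * 36 ^ k"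
proof -
  have "finite (words k)" "card (words k) = 6 ^ k"
    unfolding words_def using finite_lists_length_eq[of "{1..6::nat}" k] card_lists_length_eq[of "{1..6::nat}" k]
    by auto
  thus ?thesis unfolding Fam_def by (simp add: card_cartesian_product power_mult_distrib[symmetric])
qed

lemma pre_bound:
  fixes Q :: "'c \<Rightarrow> real set"
  assumes F: "finite F" and cov: "A \<subseteq> (\<Union>c\<in>F. Q c)"
    and good: "\<forall>c\<in>F. bounded (Q c) \<and> diameter (Q c) \<le> \<delta>" and \<delta>: "0 \<le> \<delta>"
  shows "hausdorff_pre s \<delta> A \<le> ennreal (\<Sum>c\<in>F. diameter (Q c) powr s)"
proof -
  obtain N :: nat and f where f: "F = f ` {i. i < N}" "inj_on f {i. i < N}"
    using finite_imp_nat_seg_image_inj_on[OF F] by blast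
  define C where "C i = (if i < N then Q (f i) else {})" for i
  have covC: "A \<subseteq> (\<Union>i. C i)"
  proof
    fix x assume "x \<in> A"
    then obtain c where "c \<in> F" "x \<in> Q c" using cov by blast
    then obtain i where "i < N" "c = f i" using f(1) by blast
    thus "x \<in> (\<Union>i. C i)" using \<open>x \<in> Q c\<close> unfolding C_def by (intro UN_I[of i]) auto
  qed
  have goodC: "\<forall>i. bounded (C i) \<and> diameter (C i) \<le> \<delta>"
    using good f(1) \<delta> unfolding C_def by auto
  have "hausdorff_pre s \<delta> A \<le> (\<Sum>i. ennreal (diameter (C i) powr s))"
    unfolding hausdorff_pre_def by (rule INF_lower) (use covC goodC in blast)
  also have "(\<Sum>i. ennreal (diameter (C i) powr s)) = (\<Sum>i\<in>{i. i < N}. ennreal (diameter (C i) powr s))"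
    by (rule suminf_finite) (auto simp: C_def)
  also have "\<dots> = ennreal (\<Sum>i\<in>{i. i < N}. diameter (C i) powr s)"
    by (rule sum_ennreal) simp
  also have "(\<Sum>i\<in>{i. i < N}. diameter (C i) powr s) = (\<Sum>i\<in>{i. i < N}. diameter (Q (f i)) powr s)"
    by (rule sum.cong) (auto simp: C_def)
  also have "\<dots> = (\<Sum>c\<in>F. diameter (Q c) powr s)"
    unfolding f(1) using sum.reindex[OF f(2), of "\<lambda>c. diameter (Q c) powr s"] by simp
  finally show ?thesis .
qed

context pr begin

lemma K_words:
  assumes q: "0 \<le> q" "q \<le> r"
  shows "x \<in> Kpqr p q r \<Longrightarrow> \<exists>w\<in>words k. \<exists>z\<in>Kpqr p q r. x = Sw p q r w z"
proof (induction k arbitrary: x)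
  case 0
  thus ?case by (intro bexI[of _ "[]"]) (auto simp: words_def)
next
  case (Suc k)
  obtain i x0 where i: "i \<in> {1..6}" "x0 \<in> Kpqr p q r" "x = Spqr p q r i x0"
    using Suc.prems K_props(3)[OF q] by blast
  obtain w z where wz: "w \<in> words k" "z \<in> Kpqr p q r" "x0 = Sw p q r w z"
    using Suc.IH[OF i(2)] by blast
  have "i # w \<in> words (Suc k)" using wz(1) i(1) by (auto simp: words_def)
  moreover have "x = Sw p q r (i # w) z" using i wz by simp
  ultimately show ?case using wz(2) by blast
qed

lemma Sw_range:
  assumes q: "0 \<le> q" "q \<le> r" and z: "z \<in> {0..1}"
  shows "Sw p q r w z \<in> {0..1}"
  by (induction w) (use S_range[OF q] z in auto)

lemma Sw_lip:
  assumes q1: "0 \<le> q1" "q1 \<le> r" and q2: "0 \<le> q2" "q2 \<le> r"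
    and z: "z1 \<in> {0..1}" "z2 \<in> {0..1}"
  shows "\<bar>Sw p q1 r w z1 - Sw p q2 r w z2\<bar> \<le> 2 * \<bar>q1 - q2\<bar> + r ^ length w * \<bar>z1 - z2\<bar>"
proof (induction w)
  case Nil
  thus ?case by simp
next
  case (Cons i w)
  let ?u1 = "Sw p q1 r w z1" and ?u2 = "Sw p q2 r w z2"
  have u1: "?u1 \<in> {0..1}" using Sw_range[OF q1 z(1)] .
  have "\<bar>Sw p q1 r (i # w) z1 - Sw p q2 r (i # w) z2\<bar> = \<bar>Spqr p q1 r i ?u1 - Spqr p q2 r i ?u2\<bar>" by simp
  also have "\<dots> \<le> \<bar>q1 - q2\<bar> + r * \<bar>?u1 - ?u2\<bar>" using S_pert[OF q2 q1 u1] .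
  also have "\<dots> \<le> \<bar>q1 - q2\<bar> + r * (2 * \<bar>q1 - q2\<bar> + r ^ length w * \<bar>z1 - z2\<bar>)"
    using Cons.IH r0 by (intro add_left_mono mult_left_mono) auto
  also have "\<dots> = \<bar>q1 - q2\<bar> + (2 * r) * \<bar>q1 - q2\<bar> + r ^ length (i # w) * \<bar>z1 - z2\<bar>"
    by (simp add: algebra_simps)
  also have "\<dots> \<le> \<bar>q1 - q2\<bar> + \<bar>q1 - q2\<bar> + r ^ length (i # w) * \<bar>z1 - z2\<bar>"
    using mult_left_le_one_le[of "\<bar>q1 - q2\<bar>" "2 * r"] r0 r36 by simp
  finally show ?case by simp
qed

lemma Delta_cover: "Deltamn m n p r \<subseteq> (\<Union>c\<in>Fam k. case c of ((i, j), (w, w')) \<Rightarrow> Qset m n p r i j w w')"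
proof
  fix q assume "q \<in> Deltamn m n p r"
  then obtain i j x y where qD: "q \<in> Dmn m n p r" and ij: "i \<in> {2..6}" "j \<in> {1..5}"
    and xy: "x \<in> Kpqr p q r" "y \<in> Kpqr p q r"
    and eq: "q * p ^ m * Spqr p q r i x = r ^ (n + 1) * (1 - Spqr p q r j y)"
    using Delta_iff by blast
  have q: "0 \<le> q" "q \<le> r" using D_sub[OF qD] by auto
  obtain w z1 where w: "w \<in> words k" "z1 \<in> Kpqr p q r" "x = Sw p q r w z1" using K_words[OF q xy(1)] by blast
  obtain w' z2 where w': "w' \<in> words k" "z2 \<in> Kpqr p q r" "y = Sw p q r w' z2" using K_words[OF q xy(2)] by blast
  have "q \<in> Qset m n p r i j w w'" unfolding Qset_def using qD w w' eq by blast
  moreover have "((i, j), (w, w')) \<in> Fam k" unfolding Fam_def using ij w w' by auto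
  ultimately show "q \<in> (\<Union>c\<in>Fam k. case c of ((i, j), (w, w')) \<Rightarrow> Qset m n p r i j w w')" by force
qed

lemma Q_diam:
  assumes p: "0 < p" and i: "i \<in> {2..6}" and w: "w \<in> words k" "w' \<in> words k"
    and q1Q: "q1 \<in> Qset m n p r i j w w'" and q2Q: "q2 \<in> Qset m n p r i j w w'"
  shows "\<bar>q1 - q2\<bar> \<le> 7 * r ^ (k + 1)"
proof -
  have q1D: "q1 \<in> Dmn m n p r" and q2D: "q2 \<in> Dmn m n p r" using q1Q q2Q unfolding Qset_def by auto
  have q1: "0 \<le> q1" "q1 \<le> r" and q2: "0 \<le> q2" "q2 \<le> r" using D_sub q1D q2D by auto
  obtain z11 z12 where z1: "z11 \<in> Kpqr p q1 r" "z12 \<in> Kpqr p q1 r"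
    and eq1: "q1 * p ^ m * Spqr p q1 r i (Sw p q1 r w z11) = r ^ (n + 1) * (1 - Spqr p q1 r j (Sw p q1 r w' z12))"
    using q1Q unfolding Qset_def by blast
  obtain z21 z22 where z2: "z21 \<in> Kpqr p q2 r" "z22 \<in> Kpqr p q2 r"
    and eq2: "q2 * p ^ m * Spqr p q2 r i (Sw p q2 r w z21) = r ^ (n + 1) * (1 - Spqr p q2 r j (Sw p q2 r w' z22))"
    using q2Q unfolding Qset_def by blast
  have z01: "z11 \<in> {0..1}" "z12 \<in> {0..1}" "z21 \<in> {0..1}" "z22 \<in> {0..1}"
    using z1 z2 K_props(4)[OF q1] K_props(4)[OF q2] by auto
  define d where "d = \<bar>q1 - q2\<bar>"
  define Rk where "Rk = r ^ (k + 1)"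
  define E where "E = (1 + 2 * r) * d + Rk"
  have d0: "0 \<le> d" unfolding d_def by simp
  have Rk0: "0 \<le> Rk" unfolding Rk_def using r0 by simp
  have E0: "0 \<le> E" unfolding E_def using d0 Rk0 r0 by simp
  have rk: "r ^ k \<le> 1" using r0 r36 by (simp add: power_le_one)
  have wl: "length w = k" "length w' = k" using w by (auto simp: words_def)
  have pert: "\<bar>Spqr p q1 r l (Sw p q1 r v u1) - Spqr p q2 r l (Sw p q2 r v u2)\<bar> \<le> E"
    if "length v = k" "u1 \<in> {0..1}" "u2 \<in> {0..1}" for l v u1 u2
  proof -
    have x1: "Sw p q1 r v u1 \<in> {0..1}" using Sw_range[OF q1 that(2)] .
    have "\<bar>u1 - u2\<bar> \<le> 1" using that by auto
    hence "r ^ k * \<bar>u1 - u2\<bar> \<le> r ^ k" using r0 by (simp add: mult_left_le)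
    hence xx: "\<bar>Sw p q1 r v u1 - Sw p q2 r v u2\<bar> \<le> 2 * d + r ^ k"
      using Sw_lip[OF q1 q2 that(2,3), of v] that(1) unfolding d_def by simp
    have "\<bar>Spqr p q1 r l (Sw p q1 r v u1) - Spqr p q2 r l (Sw p q2 r v u2)\<bar>
        \<le> d + r * \<bar>Sw p q1 r v u1 - Sw p q2 r v u2\<bar>"
      using S_pert[OF q2 q1 x1] unfolding d_def .
    also have "\<dots> \<le> d + r * (2 * d + r ^ k)" using xx r0 by (intro add_left_mono mult_left_mono) auto
    also have "\<dots> = E" unfolding E_def Rk_def by (simp add: algebra_simps)
    finally show ?thesis .
  qed
  define a1 where "a1 = Spqr p q1 r i (Sw p q1 r w z11)"
  define a2 where "a2 = Spqr p q2 r i (Sw p q2 r w z21)"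
  define b1 where "b1 = Spqr p q1 r j (Sw p q1 r w' z12)"
  define b2 where "b2 = Spqr p q2 r j (Sw p q2 r w' z22)"
  have da: "\<bar>a1 - a2\<bar> \<le> E" unfolding a1_def a2_def using pert wl z01 by blast
  have db: "\<bar>b2 - b1\<bar> \<le> E" unfolding b1_def b2_def using pert[of w' z12 z22] wl z01 by (simp add: abs_minus_commute)
  have a1low: "acst \<le> a1" unfolding a1_def using S_lower[OF q1 Sw_range[OF q1 z01(1)]] i by auto
  define P where "P = p ^ m"
  define R where "R = r ^ (n + 1)"
  have P0: "0 < P" unfolding P_def using p by simp
  have R0: "0 \<le> R" unfolding R_def using r0 by simp
  have e1: "q1 * P * a1 = R * (1 - b1)" using eq1 unfolding P_def R_def a1_def b1_def .
  have e2: "q2 * P * a2 = R * (1 - b2)" using eq2 unfolding P_def R_def a2_def b2_def .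
  have key: "(q1 - q2) * P * a1 = R * (b2 - b1) + q2 * P * (a2 - a1)"
  proof -
    have "(q1 - q2) * P * a1 = q1 * P * a1 - q2 * P * a1" by (simp add: algebra_simps)
    also have "\<dots> = R * (1 - b1) - q2 * P * a1" using e1 by simp
    also have "\<dots> = R * (1 - b1) - R * (1 - b2) + (q2 * P * a2 - q2 * P * a1)" using e2 by simp
    also have "\<dots> = R * (b2 - b1) + q2 * P * (a2 - a1)" by (simp add: algebra_simps)
    finally show ?thesis .
  qed
  have Rbound: "R \<le> 5 * r * P"
  proof -
    have "acst * R / P < q1" using q1D unfolding Dmn_def P_def R_def by simp
    hence "acst * R < q1 * P" using P0 by (simp add: divide_less_eq)
    also have "\<dots> \<le> r * P" using q1 P0 by (simp add: mult_right_mono)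
    finally show ?thesis unfolding acst_def by simp
  qed
  have "d * P * acst \<le> d * P * a1" using a1low d0 P0 by (intro mult_left_mono) auto
  also have "\<dots> = \<bar>(q1 - q2) * P * a1\<bar>" unfolding d_def using P0 a1low
    by (simp add: abs_mult acst_def)
  also have "\<dots> \<le> \<bar>R * (b2 - b1)\<bar> + \<bar>q2 * P * (a2 - a1)\<bar>" unfolding key by (rule abs_triangle_ineq)
  also have "\<dots> = R * \<bar>b2 - b1\<bar> + q2 * P * \<bar>a1 - a2\<bar>" using R0 q2 P0
    by (simp add: abs_mult abs_minus_commute)
  also have "\<dots> \<le> (5 * r * P) * E + (r * P) * E"
  proof (rule add_mono)
    show "R * \<bar>b2 - b1\<bar> \<le> 5 * r * P * E" using Rbound db R0 E0 P0 r0 by (intro mult_mono) auto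
    show "q2 * P * \<bar>a1 - a2\<bar> \<le> r * P * E" using q2 P0 da by (intro mult_mono) auto
  qed
  also have "\<dots> = P * (6 * r * E)" by (simp add: algebra_simps)
  finally have "P * (d * acst) \<le> P * (6 * r * E)" by (simp add: algebra_simps)
  hence main: "d * acst \<le> 6 * r * E" using P0 by simp
  have c1: "6 * r * (1 + 2 * r) \<le> 19 / 108"
  proof -
    have "6 * r \<le> 1/6" "1 + 2 * r \<le> 19/18" using r36 by auto
    hence "(6 * r) * (1 + 2 * r) \<le> (1/6) * (19/18)" using r0 by (intro mult_mono) auto
    thus ?thesis by simp
  qed
  have "6 * r * E = (6 * r * (1 + 2 * r)) * d + (6 * r) * Rk" unfolding E_def by (simp add: algebra_simps)
  also have "\<dots> \<le> (19 / 108) * d + (1/6) * Rk"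
    using c1 d0 Rk0 r36 by (intro add_mono mult_right_mono) auto
  finally have "d * acst \<le> (19 / 108) * d + (1/6) * Rk" using main by linarith
  hence "d \<le> 7 * Rk" using Rk0 unfolding acst_def by linarith
  thus ?thesis unfolding d_def Rk_def .
qed

lemma rs_bound:
  assumes s: "- 2 * ln 6 / ln r < s"
  shows "r powr s < 1 / 36" "0 < s"
proof -
  have lr: "ln r < 0" using ln_less_zero r0 r36 by simp
  have l6: "0 < ln (6::real)" by simp
  have "0 < - 2 * ln 6 / ln r" using lr l6 by (simp add: divide_pos_neg)
  thus "0 < s" using s by linarith
  have "s * ln r < (- 2 * ln 6 / ln r) * ln r" using s lr by (rule mult_strict_right_mono_neg)
  also have "\<dots> = - 2 * ln 6" using lr by simp
  finally have "exp (s * ln r) < exp (- 2 * ln 6)" by simp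
  also have "exp (- 2 * ln 6) = (1 / 36 :: real)"
  proof -
    have "exp (2 * ln (6::real)) = 36"
      using exp_of_nat_mult[of 2 "ln (6::real)"] by simp
    thus ?thesis by (simp add: exp_minus field_simps)
  qed
  finally show "r powr s < 1 / 36" using r0 by (simp add: powr_def)
qed

lemma Delta_null:
  assumes p: "0 < p" and s: "- 2 * ln 6 / ln r < s"
  shows "hausdorff_measure s (Deltamn m n p r) = 0"
proof -
  have rs: "r powr s < 1 / 36" and s0: "0 < s" using rs_bound[OF s] by auto
  define g where "g k = 25 * 36 ^ k * (7 * r ^ (k + 1)) powr s" for k :: nat
  have g_eq: "g k = (25 * (7 * r) powr s) * (36 * r powr s) ^ k" for k
  proof -
    have "(7 * r ^ (k + 1)) powr s = (7 * r) powr s * (r ^ k) powr s"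
      using r0 by (simp add: powr_mult[symmetric] algebra_simps)
    moreover have "(r ^ k) powr s = (r powr s) ^ k"
      using r0 by (simp add: powr_realpow[symmetric] powr_powr powr_power algebra_simps)
    ultimately show ?thesis unfolding g_def by (simp add: power_mult_distrib algebra_simps)
  qed
  have "(\<lambda>k. (25 * (7 * r) powr s) * (36 * r powr s) ^ k) \<longlonglongrightarrow> (25 * (7 * r) powr s) * 0"
    using rs by (intro tendsto_mult tendsto_const LIMSEQ_power_zero) simp
  hence gl: "g \<longlonglongrightarrow> 0" unfolding g_eq by simp
  have "(\<lambda>k. r ^ k) \<longlonglongrightarrow> 0" by (rule LIMSEQ_power_zero) (use r0 r36 in simp)
  from tendsto_mult[OF tendsto_const this, of "7 * r"]
  have rl: "(\<lambda>k. 7 * r ^ (k + 1)) \<longlonglongrightarrow> 0" by (simp add: algebra_simps)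
  have pre0: "hausdorff_pre s \<delta> (Deltamn m n p r) = 0" if \<delta>: "0 < \<delta>" for \<delta>
  proof -
    have "hausdorff_pre s \<delta> (Deltamn m n p r) \<le> 0"
    proof (rule ennreal_le_epsilon)
      fix \<epsilon> :: real assume \<epsilon>: "0 < \<epsilon>"
      have "eventually (\<lambda>k. g k < \<epsilon>) sequentially" using order_tendstoD(2)[OF gl \<epsilon>] .
      moreover have "eventually (\<lambda>k. 7 * r ^ (k + 1) < \<delta>) sequentially"
        using order_tendstoD(2)[OF rl] \<delta> by simp
      ultimately obtain k where k: "g k < \<epsilon>" "7 * r ^ (k + 1) < \<delta>"
        using eventually_conj eventually_sequentially by (metis (no_types, lifting) order_refl)
      define Q where "Q c = (case c of ((i, j), (w, w')) \<Rightarrow> Qset m n p r i j w w')" for c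
      have bQ: "bounded (Q c)" for c
      proof -
        have "Q c \<subseteq> {0..r}" unfolding Q_def Qset_def using D_sub by (auto split: prod.splits)
        thus ?thesis using bounded_subset[OF bounded_closed_interval] by blast
      qed
      have dQ: "diameter (Q c) \<le> 7 * r ^ (k + 1)" if "c \<in> Fam k" for c
      proof -
        obtain i j w w' where c0: "c = ((i, j), (w, w'))" by (metis surj_pair)
        have c: "c = ((i, j), (w, w'))" "i \<in> {2..6}" "w \<in> words k" "w' \<in> words k"
          using that c0 unfolding Fam_def by auto
        show ?thesis unfolding Q_def c(1) using Q_diam[OF p c(2-4)] r0
          by (intro diameter_le) (auto simp: dist_real_def)
      qed
      have "hausdorff_pre s \<delta> (Deltamn m n p r) \<le> ennreal (\<Sum>c\<in>Fam k. diameter (Q c) powr s)"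
      proof (rule pre_bound)
        show "finite (Fam k)" using card_Fam by blast
        show "Deltamn m n p r \<subseteq> (\<Union>c\<in>Fam k. Q c)" using Delta_cover unfolding Q_def by blast
        show "\<forall>c\<in>Fam k. bounded (Q c) \<and> diameter (Q c) \<le> \<delta>" using bQ dQ k(2) by force
      qed (use \<delta> in simp)
      also have "(\<Sum>c\<in>Fam k. diameter (Q c) powr s) \<le> of_nat (card (Fam k)) * (7 * r ^ (k + 1)) powr s"
      proof (rule sum_bounded_above)
        fix c assume "c \<in> Fam k"
        show "diameter (Q c) powr s \<le> (7 * r ^ (k + 1)) powr s"
          using dQ[OF \<open>c \<in> Fam k\<close>] diameter_ge_0[OF bQ] s0 by (intro powr_mono2) auto
      qed
      also have "\<dots> = g k" unfolding g_def using card_Fam by simp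
      finally have "hausdorff_pre s \<delta> (Deltamn m n p r) \<le> ennreal (g k)" by (simp add: ennreal_leI)
      also have "\<dots> \<le> ennreal \<epsilon>" using k(1) by (simp add: ennreal_leI)
      finally show "hausdorff_pre s \<delta> (Deltamn m n p r) \<le> 0 + ennreal \<epsilon>" by simp
    qed
    thus ?thesis by simp
  qed
  show ?thesis unfolding hausdorff_measure_def using pre0 by simp
qed

end


theorem lemma4:
  fixes p r :: real and m n :: nat
  assumes "0 < r" and "r < 1/36" and "0 < p" and "p < r"
  shows "closedin (top_of_set (Dmn m n p r)) (Deltamn m n p r) \<and>
         hausdorff_dim (Deltamn m n p r) \<le> - 2 * ln 6 / ln r"
proof -
  interpret pr p r using assms by unfold_locales auto
  have "hausdorff_dim (Deltamn m n p r) \<le> - 2 * ln 6 / ln r"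
  proof (rule field_le_epsilon)
    fix e :: real assume e: "0 < e"
    let ?s0 = "- 2 * ln 6 / ln r"
    have lr: "ln r < 0" using ln_less_zero assms(1,2) by simp
    have "0 < ?s0" using lr by (simp add: divide_pos_neg)
    have "?s0 + e \<in> {s. 0 \<le> s \<and> hausdorff_measure s (Deltamn m n p r) = 0}"
      using Delta_null[OF assms(3), of "?s0 + e"] e \<open>0 < ?s0\<close> by simp
    moreover have "bdd_below {s. 0 \<le> s \<and> hausdorff_measure s (Deltamn m n p r) = 0}"
      by (rule bdd_belowI[of _ 0]) auto
    ultimately show "hausdorff_dim (Deltamn m n p r) \<le> ?s0 + e"
      unfolding hausdorff_dim_def by (rule cInf_lower)
  qed
  thus ?thesis using Delta_closed by blast
qed

end
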